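(* For $i\in\{1,\dots,m\}$ let $X_i\sim\operatorname{Ber}(p_i,s_i)$ with $p_i\in[0,1)$, $s_i>0$, and let $P_i\sim\operatorname{Poi}\!\left(\ln\frac{1}{1-p_i},\bar s_i\right)$ with $\bar s_i\ge s_i$, all these $2m$ variables being independent. Let $B=\sum_{i=1}^m X_i$ and $P=\sum_{i=1}^m P_i$. Then $\mathbb{P}(B>1)\le\mathbb{P}(P>1)$.
   Context: For $s>0$: $X\sim\operatorname{Ber}(p,s)$ means $X=sZ$ with $Z\sim\operatorname{Ber}(p)$ (Bernoulli), and $P\sim\operatorname{Poi}(\lambda,s)$ means $P=sZ$ with $Z\sim\operatorname{Poi}(\lambda)$ (Poisson with mean $\lambda$). *)

theory Defs
  imports "HOL-Probability.Probability"
begin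

definition poisson_measure :: "real \<Rightarrow> nat measure" where
  "poisson_measure lam =
     density (count_space UNIV) (\<lambda>k. ennreal (lam ^ k / fact k * exp (- lam)))"

definition scaled_poisson :: "real \<Rightarrow> real \<Rightarrow> real measure" where
  "scaled_poisson lam s = distr (poisson_measure lam) borel (\<lambda>k. s * real k)"

definition scaled_bernoulli :: "real \<Rightarrow> real \<Rightarrow> real measure" where
  "scaled_bernoulli p s = distr (measure_pmf (bernoulli_pmf p)) borel (\<lambda>b. s * (if b then 1 else 0))"

end

theory Submission
  imports Defs
begin

lemma (in prob_space) indep_sets_reindex:
  assumes "inj_on f I" "indep_sets F (f ` I)"
  shows "indep_sets (\<lambda>i. F (f i)) I"
  unfolding indep_sets_def
proof (intro conjI ballI allI impI)
  fix i assume "i \<in> I" then show "F (f i) \<subseteq> events" using assms(2) by (auto simp: indep_sets_def)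
next
  fix J A assume J: "J \<subseteq> I" "J \<noteq> {}" "finite J" and A: "A \<in> Pi J (\<lambda>i. F (f i))"
  define A' where "A' = (\<lambda>j. A (the_inv_into J f j))"
  have inj: "inj_on f J" using assms(1) J(1) inj_on_subset by blast
  have A'f: "\<And>i. i \<in> J \<Longrightarrow> A' (f i) = A i" using inj by (simp add: A'_def the_inv_into_f_f)
  have "A' \<in> Pi (f ` J) F" using A A'f by auto
  moreover have "f ` J \<subseteq> f ` I" "f ` J \<noteq> {}" "finite (f ` J)" using J by auto
  ultimately have "prob (\<Inter>j\<in>f ` J. A' j) = (\<Prod>j\<in>f ` J. prob (A' j))"
    using assms(2) unfolding indep_sets_def by blast
  moreover have "(\<Inter>j\<in>f ` J. A' j) = (\<Inter>j\<in>J. A j)" using A'f by auto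
  moreover have "(\<Prod>j\<in>f ` J. prob (A' j)) = (\<Prod>j\<in>J. prob (A j))"
    using inj A'f by (simp add: prod.reindex)
  ultimately show "prob (\<Inter>j\<in>J. A j) = (\<Prod>j\<in>J. prob (A j))" by simp
qed

lemma (in prob_space) indep_vars_reindex:
  assumes "inj_on f I" "indep_vars M' X (f ` I)"
  shows "indep_vars (\<lambda>i. M' (f i)) (\<lambda>i. X (f i)) I"
  using assms indep_sets_reindex[OF assms(1), of "\<lambda>i. { X i -` A \<inter> space M | A. A \<in> sets (M' i)}"]
  unfolding indep_vars_def2 by auto

lemma bool_measure_eq:
  assumes "prob_space N" "prob_space N'" "sets N = Pow UNIV" "sets N' = Pow (UNIV::bool set)"
    "emeasure N {False} = emeasure N' {False}"
  shows "N = N'"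
proof (rule measure_eqI_finite[OF assms(3,4)])
  have sp: "space N = UNIV" "space N' = UNIV"
    using sets_eq_imp_space_eq[of N "count_space UNIV"] sets_eq_imp_space_eq[of N' "count_space UNIV"]
      assms(3,4) by auto
  have mF: "measure N {False} = measure N' {False}" using assms(5) by (simp add: measure_def)
  have cT: "UNIV - {False} = {True}" by auto
  have "measure N {True} = 1 - measure N {False}"
    using prob_space.prob_compl[OF assms(1), of "{False}"] sp cT assms(3) by simp
  moreover have "measure N' {True} = 1 - measure N' {False}"
    using prob_space.prob_compl[OF assms(2), of "{False}"] sp cT assms(4) by simp
  ultimately have "measure N {True} = measure N' {True}" using mF by simp
  then have "emeasure N {True} = emeasure N' {True}"
    using finite_measure.emeasure_eq_measure[OF prob_space.axioms(1)[OF assms(1)]] finite_measure.emeasure_eq_measure[OF prob_space.axioms(1)[OF assms(2)]] by simp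
  then show "emeasure N {a} = emeasure N' {a}" for a using assms(5) by (cases a) auto
qed simp

lemma bern_law:
  assumes "s > 0"
  shows "distr (scaled_bernoulli p s) (count_space UNIV) (\<lambda>x::real. 0 < x)
       = distr (measure_pmf (bernoulli_pmf p)) (count_space UNIV) (\<lambda>b. b)"
proof -
  have "(\<lambda>x::real. 0 < x) \<circ> (\<lambda>b. s * (if b then 1 else 0)) = (\<lambda>b. b)"
    using assms by (auto simp: fun_eq_iff zero_less_mult_iff)
  then show ?thesis unfolding scaled_bernoulli_def
    by (subst distr_distr) auto
qed

lemma bern_False:
  assumes "0 \<le> p" "p \<le> 1"
  shows "emeasure (distr (measure_pmf (bernoulli_pmf p)) (count_space UNIV) (\<lambda>b. b)) {False} = ennreal (1 - p)"
  using assms by (subst emeasure_distr) (auto simp: emeasure_pmf_single vimage_def)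

lemma poi_law:
  assumes "s > 0"
  shows "distr (scaled_poisson lam s) (count_space UNIV) (\<lambda>x::real. 0 < x)
       = distr (poisson_measure lam) (count_space UNIV) (\<lambda>k. 0 < k)"
proof -
  have "(\<lambda>x::real. 0 < x) \<circ> (\<lambda>k. s * real k) = (\<lambda>k. 0 < k)"
    using assms by (auto simp: fun_eq_iff zero_less_mult_iff)
  then show ?thesis unfolding scaled_poisson_def
    by (subst distr_distr) (auto simp: poisson_measure_def)
qed

lemma poi_False:
  shows "emeasure (distr (poisson_measure lam) (count_space UNIV) (\<lambda>k. 0 < k)) {False} = ennreal (exp (- lam))"
proof -
  have "(\<lambda>k::nat. 0 < k) -` {False} \<inter> space (poisson_measure lam) = {0}"
    by (auto simp: poisson_measure_def)
  then show ?thesis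
    by (subst emeasure_distr) (auto simp: poisson_measure_def emeasure_density)
qed


theorem lemma3:
  fixes M :: "'a measure" and m :: nat
    and p s sbar :: "nat \<Rightarrow> real"
    and X Pv :: "nat \<Rightarrow> 'a \<Rightarrow> real"
  assumes "prob_space M"
    and p_range: "\<And>i. i \<in> {1..m} \<Longrightarrow> 0 \<le> p i \<and> p i < 1"
    and s_pos: "\<And>i. i \<in> {1..m} \<Longrightarrow> s i > 0"
    and sbar_ge: "\<And>i. i \<in> {1..m} \<Longrightarrow> sbar i \<ge> s i"
    and X_distr: "\<And>i. i \<in> {1..m} \<Longrightarrow> distr M borel (X i) = scaled_bernoulli (p i) (s i)"
    and P_distr: "\<And>i. i \<in> {1..m} \<Longrightarrow>
        distr M borel (Pv i) = scaled_poisson (ln (1 / (1 - p i))) (sbar i)"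
    and indep: "prob_space.indep_vars M (\<lambda>_. borel)
        (\<lambda>k. case k of Inl i \<Rightarrow> X i | Inr i \<Rightarrow> Pv i) ({1..m} <+> {1..m})"
  shows "measure M {\<omega> \<in> space M. (\<Sum>i=1..m. X i \<omega>) > 1}
           \<le> measure M {\<omega> \<in> space M. (\<Sum>i=1..m. Pv i \<omega>) > 1}"
proof (cases "m = 0")
  case True
  then show ?thesis by simp
next
  case False
  interpret prob_space M by fact
  define I where "I = {1..m}"
  have Ine: "I \<noteq> {}" using False by (auto simp: I_def)
  have finI: "finite I" by (simp add: I_def)
  define V where "V = (\<lambda>k. case k of Inl i \<Rightarrow> X i | Inr i \<Rightarrow> Pv i)"
  have indX: "indep_vars (\<lambda>_. borel) X I"
  proof -
    have "indep_vars (\<lambda>_. borel) V (Inl ` I)"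
      unfolding V_def by (rule indep_vars_subset[OF indep]) (auto simp: I_def)
    moreover have "inj_on Inl I" by (simp add: inj_on_def)
    ultimately show ?thesis using indep_vars_reindex[of Inl I "\<lambda>_. borel" V] by (simp add: V_def)
  qed
  have indP: "indep_vars (\<lambda>_. borel) Pv I"
  proof -
    have "indep_vars (\<lambda>_. borel) V (Inr ` I)"
      unfolding V_def by (rule indep_vars_subset[OF indep]) (auto simp: I_def)
    moreover have "inj_on Inr I" by (simp add: inj_on_def)
    ultimately show ?thesis using indep_vars_reindex[of Inr I "\<lambda>_. borel" V] by (simp add: V_def)
  qed
  have Xm: "\<And>i. i \<in> I \<Longrightarrow> X i \<in> borel_measurable M"
    using indX unfolding indep_vars_def by auto
  have Pm: "\<And>i. i \<in> I \<Longrightarrow> Pv i \<in> borel_measurable M"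
    using indP unfolding indep_vars_def by auto
  define bX where "bX = (\<lambda>i \<omega>. 0 < X i \<omega>)"
  define bP where "bP = (\<lambda>i \<omega>. 0 < Pv i \<omega>)"
  have bXm: "\<And>i. i \<in> I \<Longrightarrow> bX i \<in> measurable M (count_space UNIV)"
    unfolding bX_def using Xm by measurable
  have bPm: "\<And>i. i \<in> I \<Longrightarrow> bP i \<in> measurable M (count_space UNIV)"
    unfolding bP_def using Pm by measurable
  have indbX: "indep_vars (\<lambda>_. count_space UNIV) bX I"
    unfolding bX_def
    by (rule indep_vars_compose2[OF indX, where Y="\<lambda>_ x. 0 < x", simplified]) measurable
  have indbP: "indep_vars (\<lambda>_. count_space UNIV) bP I"
    unfolding bP_def
    by (rule indep_vars_compose2[OF indP, where Y="\<lambda>_ x. 0 < x", simplified]) measurable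
  have lawX: "distr M (count_space UNIV) (bX i) = distr (measure_pmf (bernoulli_pmf (p i))) (count_space UNIV) (\<lambda>b. b)"
    if "i \<in> I" for i
  proof -
    have "distr M (count_space UNIV) (bX i) = distr (distr M borel (X i)) (count_space UNIV) (\<lambda>x::real. 0 < x)"
      unfolding bX_def using Xm[OF that] by (subst distr_distr) (auto simp: comp_def)
    also have "\<dots> = distr (measure_pmf (bernoulli_pmf (p i))) (count_space UNIV) (\<lambda>b. b)"
      using X_distr[of i] s_pos[of i] that bern_law unfolding I_def by auto
    finally show ?thesis .
  qed
  have lawP: "distr M (count_space UNIV) (bP i) = distr (poisson_measure (ln (1 / (1 - p i)))) (count_space UNIV) (\<lambda>k. 0 < k)"
    if "i \<in> I" for i
  proof -
    have "distr M (count_space UNIV) (bP i) = distr (distr M borel (Pv i)) (count_space UNIV) (\<lambda>x::real. 0 < x)"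
      unfolding bP_def using Pm[OF that] by (subst distr_distr) (auto simp: comp_def)
    also have "\<dots> = distr (poisson_measure (ln (1 / (1 - p i)))) (count_space UNIV) (\<lambda>k. 0 < k)"
      using P_distr[of i] s_pos[of i] sbar_ge[of i] that poi_law unfolding I_def by auto
    finally show ?thesis .
  qed
  have law_eq: "distr M (count_space UNIV) (bX i) = distr M (count_space UNIV) (bP i)"
    if "i \<in> I" for i
  proof (rule bool_measure_eq)
    show "prob_space (distr M (count_space UNIV) (bX i))"
      by (rule prob_space_distr[OF bXm[OF that]])
    show "prob_space (distr M (count_space UNIV) (bP i))"
      by (rule prob_space_distr[OF bPm[OF that]])
    have p: "0 \<le> p i" "p i < 1" using p_range[of i] that unfolding I_def by auto
    have "exp (- ln (1 / (1 - p i))) = 1 - p i"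
      using p by (simp add: ln_div)
    then show "emeasure (distr M (count_space UNIV) (bX i)) {False} = emeasure (distr M (count_space UNIV) (bP i)) {False}"
      using lawX[OF that] lawP[OF that] bern_False[of "p i"] poi_False p by simp
  qed auto
  define PI where "PI = (\<Pi>\<^sub>M i\<in>I. (count_space (UNIV::bool set)))"
  define E where "E = {g \<in> space PI. 1 < (\<Sum>i\<in>I. s i * (if g i then 1 else 0))}"
  have Esets: "E \<in> sets PI"
    unfolding E_def PI_def by measurable
  have jointX: "distr M PI (\<lambda>\<omega>. \<lambda>i\<in>I. bX i \<omega>) = (\<Pi>\<^sub>M i\<in>I. distr M (count_space UNIV) (bX i))"
    unfolding PI_def using indep_vars_iff_distr_eq_PiM'[OF Ine bXm] indbX by simp
  have jointP: "distr M PI (\<lambda>\<omega>. \<lambda>i\<in>I. bP i \<omega>) = (\<Pi>\<^sub>M i\<in>I. distr M (count_space UNIV) (bP i))"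
    unfolding PI_def using indep_vars_iff_distr_eq_PiM'[OF Ine bPm] indbP by simp
  have joint: "distr M PI (\<lambda>\<omega>. \<lambda>i\<in>I. bX i \<omega>) = distr M PI (\<lambda>\<omega>. \<lambda>i\<in>I. bP i \<omega>)"
    unfolding jointX jointP using law_eq by (intro PiM_cong) auto
  have FXm: "(\<lambda>\<omega>. \<lambda>i\<in>I. bX i \<omega>) \<in> measurable M PI"
    unfolding PI_def using bXm by (intro measurable_restrict) auto
  have FPm: "(\<lambda>\<omega>. \<lambda>i\<in>I. bP i \<omega>) \<in> measurable M PI"
    unfolding PI_def using bPm by (intro measurable_restrict) auto
  have spPI: "(\<lambda>i\<in>I. f i) \<in> space PI" for f :: "nat \<Rightarrow> bool"
    unfolding PI_def by (simp add: space_PiM)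
  have eqX: "measure M {\<omega> \<in> space M. 1 < (\<Sum>i\<in>I. s i * (if bX i \<omega> then 1 else 0))}
      = measure (distr M PI (\<lambda>\<omega>. \<lambda>i\<in>I. bX i \<omega>)) E"
    using Esets FXm spPI by (subst measure_distr) (auto simp: E_def intro!: arg_cong[where f="measure M"])
  have eqP: "measure M {\<omega> \<in> space M. 1 < (\<Sum>i\<in>I. s i * (if bP i \<omega> then 1 else 0))}
      = measure (distr M PI (\<lambda>\<omega>. \<lambda>i\<in>I. bP i \<omega>)) E"
    using Esets FPm spPI by (subst measure_distr) (auto simp: E_def intro!: arg_cong[where f="measure M"])
  have aeX: "AE \<omega> in M. \<forall>i\<in>I. X i \<omega> \<le> s i"
  proof (rule AE_finite_allI[OF finI])
    fix i assume i: "i \<in> I"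
    have "AE x in distr M borel (X i). x \<le> s i"
      unfolding X_distr[OF i[unfolded I_def]] scaled_bernoulli_def
      using s_pos[of i] i unfolding I_def by (subst AE_distr_iff) auto
    then show "AE \<omega> in M. X i \<omega> \<le> s i"
      using Xm[OF i] by (subst (asm) AE_distr_iff) auto
  qed
  have aeP: "AE \<omega> in M. \<forall>i\<in>I. Pv i \<omega> = 0 \<or> sbar i \<le> Pv i \<omega>"
  proof (rule AE_finite_allI[OF finI])
    fix i assume i: "i \<in> I"
    have sb: "0 \<le> sbar i" using s_pos[of i] sbar_ge[of i] i unfolding I_def by force
    have k: "sbar i * real k = 0 \<or> sbar i \<le> sbar i * real k" for k :: nat
      using sb by (cases k) (auto simp: algebra_simps)
    have "AE x in distr M borel (Pv i). x = 0 \<or> sbar i \<le> x"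
      unfolding P_distr[OF i[unfolded I_def]] scaled_poisson_def
      using k by (subst AE_distr_iff) (auto simp: poisson_measure_def)
    then show "AE \<omega> in M. Pv i \<omega> = 0 \<or> sbar i \<le> Pv i \<omega>"
      using Pm[OF i] by (subst (asm) AE_distr_iff) auto
  qed
  have sumXm: "(\<lambda>\<omega>. \<Sum>i\<in>I. X i \<omega>) \<in> borel_measurable M"
    using Xm by (intro borel_measurable_sum) auto
  have sumPm: "(\<lambda>\<omega>. \<Sum>i\<in>I. Pv i \<omega>) \<in> borel_measurable M"
    using Pm by (intro borel_measurable_sum) auto
  have sumbXm: "(\<lambda>\<omega>. \<Sum>i\<in>I. s i * (if bX i \<omega> then 1 else 0)) \<in> borel_measurable M"
    using Xm unfolding bX_def by (intro borel_measurable_sum) auto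
  have step1: "measure M {\<omega> \<in> space M. 1 < (\<Sum>i\<in>I. X i \<omega>)}
      \<le> measure M {\<omega> \<in> space M. 1 < (\<Sum>i\<in>I. s i * (if bX i \<omega> then 1 else 0))}"
  proof (rule finite_measure_mono_AE)
    show "AE x in M. x \<in> {\<omega> \<in> space M. 1 < (\<Sum>i\<in>I. X i \<omega>)} \<longrightarrow>
        x \<in> {\<omega> \<in> space M. 1 < (\<Sum>i\<in>I. s i * (if bX i \<omega> then 1 else 0))}"
      using aeX
    proof eventually_elim
      case (elim \<omega>)
      have "(\<Sum>i\<in>I. X i \<omega>) \<le> (\<Sum>i\<in>I. s i * (if bX i \<omega> then 1 else 0))"
        using elim by (intro sum_mono) (auto simp: bX_def)
      then show ?case by auto
    qed
    show "{\<omega> \<in> space M. 1 < (\<Sum>i\<in>I. s i * (if bX i \<omega> then 1 else 0))} \<in> sets M"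
      using sumbXm by measurable
  qed
  have step3: "measure M {\<omega> \<in> space M. 1 < (\<Sum>i\<in>I. s i * (if bP i \<omega> then 1 else 0))}
      \<le> measure M {\<omega> \<in> space M. 1 < (\<Sum>i\<in>I. Pv i \<omega>)}"
  proof (rule finite_measure_mono_AE)
    show "AE x in M. x \<in> {\<omega> \<in> space M. 1 < (\<Sum>i\<in>I. s i * (if bP i \<omega> then 1 else 0))} \<longrightarrow>
        x \<in> {\<omega> \<in> space M. 1 < (\<Sum>i\<in>I. Pv i \<omega>)}"
      using aeP
    proof eventually_elim
      case (elim \<omega>)
      have "(\<Sum>i\<in>I. s i * (if bP i \<omega> then 1 else 0)) \<le> (\<Sum>i\<in>I. Pv i \<omega>)"
      proof (intro sum_mono)
        fix i assume i: "i \<in> I"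
        have "s i \<le> sbar i" "0 < s i" using sbar_ge[of i] s_pos[of i] i unfolding I_def by auto
        then show "s i * (if bP i \<omega> then 1 else 0) \<le> Pv i \<omega>"
          using elim i unfolding bP_def by (cases "0 < Pv i \<omega>") force+
      qed
      then show ?case by auto
    qed
    show "{\<omega> \<in> space M. 1 < (\<Sum>i\<in>I. Pv i \<omega>)} \<in> sets M"
      using sumPm by measurable
  qed
  show ?thesis
    using step1 step3 eqX eqP joint unfolding I_def by simp
qed

end
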